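(* Let $G$ be a finite group, $p$ a prime, and $n>0$ an integer with $\gcd(n,p)=1$. Then $P_e(G)\cong P_e(\mathbb{Z}_p\times\mathbb{Z}_p\times\mathbb{Z}_n)$ if and only if $G\cong \mathbb{Z}_p\times\mathbb{Z}_p\times\mathbb{Z}_n$.
   Context: All groups are finite. $\mathbb{Z}_k$ denotes the cyclic group of order $k$. For a group $X$, the enhanced power graph $P_e(X)$ is the simple graph with vertex set $X$ in which two distinct vertices $x,y$ are adjacent if and only if $\langle x,y\rangle$ is cyclic. *)

theory Defs
  imports "HOL-Algebra.Algebra"
begin

definition epg_adj :: "('a, 'b) monoid_scheme \<Rightarrow> 'a \<Rightarrow> 'a \<Rightarrow> bool" where
  "epg_adj G x y \<longleftrightarrow> x \<in> carrier G \<and> y \<in> carrier G \<and> x \<noteq> y \<and>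
     cyclic_group (subgroup_generated G {x, y})"

definition epg_iso :: "('a, 'b) monoid_scheme \<Rightarrow> ('c, 'd) monoid_scheme \<Rightarrow> bool" where
  "epg_iso G H \<longleftrightarrow> (\<exists>f. bij_betw f (carrier G) (carrier H) \<and>
     (\<forall>x\<in>carrier G. \<forall>y\<in>carrier G. epg_adj G x y \<longleftrightarrow> epg_adj H (f x) (f y)))"

definition Zppn :: "nat \<Rightarrow> nat \<Rightarrow> (int \<times> int \<times> int) monoid" where
  "Zppn p n = integer_mod_group p \<times>\<times> integer_mod_group p \<times>\<times> integer_mod_group n"

end

theory Submission
  imports Defs "HOL-Number_Theory.Number_Theory"
begin

context group begin

lemma gen_nat:
  assumes "finite (carrier G)" "w \<in> carrier G"
  shows "generate G {w} = {w [^] (k::nat) | k. True}"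
proof -
  have "ord w \<noteq> 0" using ord_ge_1[OF assms] by simp
  then show ?thesis using generate_pow_nat[OF assms(2)] by simp
qed

lemma gen_sub:
  assumes "w \<in> carrier G" "x \<in> generate G {w}"
  shows "generate G {x} \<subseteq> generate G {w}"
  using assms generate_subgroup_incl generate_is_subgroup by (metis empty_subsetI insert_subset)

lemma gen_carrier:
  assumes "w \<in> carrier G"
  shows "generate G {w} \<subseteq> carrier G"
  using assms generate_incl by blast

lemma gen_self: "w \<in> carrier G \<Longrightarrow> w \<in> generate G {w}"
  by (simp add: generate.incl)

lemma gen_card: "w \<in> carrier G \<Longrightarrow> card (generate G {w}) = ord w"
  using generate_pow_card by simp

lemma sub_cyclic:
  assumes fin: "finite (carrier G)" and H: "subgroup H G" and w: "w \<in> carrier G"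
    and sub: "H \<subseteq> generate G {w}"
  shows "\<exists>z\<in>carrier G. H = generate G {z}"
proof -
  define P where "P d \<longleftrightarrow> 0 < d \<and> w [^] d \<in> H" for d :: nat
  have "P (ord w)" unfolding P_def using ord_ge_1[OF fin w] w subgroup.one_closed[OF H] by simp
  define d where "d = (LEAST d. P d)"
  have Pd: "P d" unfolding d_def by (rule LeastI, fact)
  have dmin: "\<And>e. P e \<Longrightarrow> d \<le> e" unfolding d_def by (rule Least_le)
  define z where "z = w [^] d"
  have z: "z \<in> carrier G" "z \<in> H" using Pd w unfolding z_def P_def by auto
  have "H \<subseteq> generate G {z}"
  proof
    fix h assume "h \<in> H"
    then obtain k::nat where k: "h = w [^] k" using sub gen_nat[OF fin w] by auto
    define q r where "q = k div d" and "r = k mod d"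
    have kqr: "k = d * q + r" unfolding q_def r_def by simp
    have "h = (w [^] d) [^] q \<otimes> w [^] r" using k kqr w by (simp add: nat_pow_mult nat_pow_pow)
    hence "w [^] r = inv ((w [^] d) [^] q) \<otimes> h" using w \<open>h \<in> H\<close> sub
      by (metis gen_carrier inv_solve_left' nat_pow_closed subsetD)
    moreover have "inv ((w [^] d) [^] q) \<in> H"
      using z H subgroup_int_pow_closed[OF H z(2), of "int q"] subgroup.m_inv_closed
      unfolding z_def by (simp add: int_pow_int)
    ultimately have "w [^] r \<in> H" using \<open>h \<in> H\<close> H subgroup.m_closed by fastforce
    moreover have "r < d" using Pd unfolding r_def P_def by simp
    ultimately have "r = 0" using dmin unfolding P_def by (meson leD neq0_conv)
    hence "h = z [^] q" using k kqr z_def w by (simp add: nat_pow_pow)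
    thus "h \<in> generate G {z}" using gen_nat[OF fin z(1)] by auto
  qed
  moreover have "generate G {z} \<subseteq> H"
    using z H generate_subgroup_incl by (metis empty_subsetI insert_subset)
  ultimately show ?thesis using z by blast
qed

lemma cyclic_char:
  assumes fin: "finite (carrier G)" and xy: "x \<in> carrier G" "y \<in> carrier G"
  shows "cyclic_group (subgroup_generated G {x,y}) \<longleftrightarrow>
         (\<exists>w\<in>carrier G. x \<in> generate G {w} \<and> y \<in> generate G {w})"
proof -
  let ?H = "subgroup_generated G {x,y}"
  have cH: "carrier ?H = generate G {x,y}"
    using xy by (simp add: carrier_subgroup_generated Int_absorb1)
  have gH: "group ?H" by (rule group_subgroup_generated)
  show ?thesis
  proof
    assume "cyclic_group ?H"
    then obtain z where z: "z \<in> carrier ?H" "carrier ?H = range (\<lambda>n::int. z [^]\<^bsub>?H\<^esub> n)"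
      using group.cyclic_group[OF gH] by blast
    have gxy: "generate G {x,y} \<subseteq> carrier G" by (rule generate_incl) (use xy in auto)
    have zG: "z \<in> carrier G" using z(1) cH gxy by blast
    have pw: "\<And>n::int. z [^]\<^bsub>?H\<^esub> n = z [^] n" using int_pow_subgroup_generated[OF z(1)] by blast
    have "carrier ?H = range (\<lambda>n::int. z [^] n)" using z(2) unfolding pw .
    hence "carrier ?H = generate G {z}" using generate_pow[OF zG] by auto
    moreover have "x \<in> carrier ?H" "y \<in> carrier ?H" using cH by (auto intro: generate.incl)
    ultimately show "\<exists>w\<in>carrier G. x \<in> generate G {w} \<and> y \<in> generate G {w}" using zG by auto
  next
    assume "\<exists>w\<in>carrier G. x \<in> generate G {w} \<and> y \<in> generate G {w}"
    then obtain w where w: "w \<in> carrier G" "x \<in> generate G {w}" "y \<in> generate G {w}" by blast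
    have "generate G {x,y} \<subseteq> generate G {w}"
      using w generate_subgroup_incl generate_is_subgroup by (metis empty_subsetI insert_subset)
    then obtain z where z: "z \<in> carrier G" "generate G {x,y} = generate G {z}"
      using sub_cyclic[OF fin _ w(1), of "generate G {x,y}"] generate_is_subgroup[of "{x,y}"] xy by auto
    have zH: "z \<in> carrier ?H" using cH z gen_self by auto
    have pw: "\<And>n::int. z [^]\<^bsub>?H\<^esub> n = z [^] n" using int_pow_subgroup_generated[OF zH] by blast
    have "carrier ?H = generate G {z}" using cH z(2) by simp
    also have "\<dots> = range (\<lambda>n::int. z [^] n)" using generate_pow[OF z(1)] by auto
    finally have "carrier ?H = range (\<lambda>n::int. z [^]\<^bsub>?H\<^esub> n)" unfolding pw .
    then show "cyclic_group ?H" using group.cyclic_group[OF gH] zH by blast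
  qed
qed

end

definition Nbh :: "('a, 'b) monoid_scheme \<Rightarrow> 'a \<Rightarrow> 'a set" where
  "Nbh G x = {y \<in> carrier G. \<exists>w\<in>carrier G. x \<in> generate G {w} \<and> y \<in> generate G {w}}"

locale epg_abs = group G for G (structure) +
  fixes p n :: nat
  assumes fin: "finite (carrier G)"
    and pprime: "Factorial_Ring.prime p" and npos: "n > 0" and cop: "coprime n p"
    and cardG: "card (carrier G) = p*p*n"
    and cardD: "card {x \<in> carrier G. Nbh G x = carrier G} = n"
    and cardN: "\<And>x. x \<in> carrier G \<Longrightarrow> Nbh G x \<noteq> carrier G \<Longrightarrow> card (Nbh G x) = p*n"
begin

abbreviation "N \<equiv> Nbh G"
definition "D = {x \<in> carrier G. N x = carrier G}"

lemma p2: "p \<ge> 2" using pprime by (simp add: prime_ge_2_nat)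

lemma N_sub: "N x \<subseteq> carrier G" unfolding Nbh_def by auto

lemma N_fin: "finite (N x)" using N_sub fin finite_subset by blast

lemma N_self: "x \<in> carrier G \<Longrightarrow> x \<in> N x"
  unfolding Nbh_def using gen_self by blast

lemma gen_N: "x \<in> carrier G \<Longrightarrow> generate G {x} \<subseteq> N x"
  unfolding Nbh_def using gen_self gen_carrier by blast

lemma N_sym: "x \<in> carrier G \<Longrightarrow> y \<in> N x \<Longrightarrow> x \<in> N y"
  unfolding Nbh_def by blast

lemma N_mono: "w \<in> carrier G \<Longrightarrow> x \<in> generate G {w} \<Longrightarrow> N w \<subseteq> N x"
  unfolding Nbh_def using gen_sub by blast

lemma D_sub: "D \<subseteq> carrier G" unfolding D_def by auto

lemma notD: "x \<in> carrier G \<Longrightarrow> x \<notin> D \<Longrightarrow> N x \<noteq> carrier G \<and> card (N x) = p*n"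
  unfolding D_def using cardN by auto

lemma D_in_N: "d \<in> D \<Longrightarrow> x \<in> carrier G \<Longrightarrow> d \<in> N x"
proof -
  assume d: "d \<in> D" and x: "x \<in> carrier G"
  have "N d = carrier G" "d \<in> carrier G" using d unfolding D_def by auto
  thus "d \<in> N x" using N_sym[of d x] x by simp
qed

lemma cardD': "card D = n" using cardD unfolding D_def by simp

lemma pn_lt: "p*n < p*p*n" using p2 npos by simp

lemma key_w:
  assumes x: "x \<in> carrier G" "x \<notin> D" and y: "y \<in> N x"
  obtains w where "w \<in> carrier G" "w \<notin> D" "x \<in> generate G {w}" "y \<in> generate G {w}" "N w = N x"
proof -
  obtain w where w: "w \<in> carrier G" "x \<in> generate G {w}" "y \<in> generate G {w}"
    using y unfolding Nbh_def by blast
  have sub: "N w \<subseteq> N x" using N_mono w by blast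
  have wD: "w \<notin> D"
  proof
    assume "w \<in> D" hence "N w = carrier G" unfolding D_def by simp
    thus False using sub notD[OF x] N_sub by blast
  qed
  have "card (N w) = card (N x)" using notD[OF w(1) wD] notD[OF x] by simp
  hence "N w = N x" using sub N_fin card_subset_eq by blast
  thus ?thesis using that w wD by blast
qed

lemma key:
  assumes x: "x \<in> carrier G" "x \<notin> D" and z: "z \<in> N x" "z \<notin> D"
  shows "N z = N x"
proof -
  obtain w where w: "w \<in> carrier G" "w \<notin> D" "x \<in> generate G {w}" "z \<in> generate G {w}" "N w = N x"
    using key_w[OF x z(1)] by blast
  have sub: "N w \<subseteq> N z" using N_mono w by blast
  have zc: "z \<in> carrier G" using z N_sub by blast
  have "card (N w) = card (N z)" using notD[OF w(1,2)] notD[OF zc z(2)] by simp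
  hence "N w = N z" using sub N_fin card_subset_eq by blast
  thus ?thesis using w by simp
qed

lemma cyc:
  assumes x: "x \<in> carrier G" "x \<notin> D"
  shows "\<exists>g\<in>carrier G. g \<notin> D \<and> N x = generate G {g} \<and> ord g = p*n"
proof -
  define S where "S = N x - D"
  have Sfin: "finite S" unfolding S_def using N_fin by blast
  have "x \<in> S" unfolding S_def using N_self x by blast
  define m where "m = Max (ord ` S)"
  have "m \<in> ord ` S" unfolding m_def using Sfin \<open>x \<in> S\<close> by (intro Max_in) auto
  then obtain g where g: "g \<in> S" "ord g = m" by blast
  have gmax: "\<And>h. h \<in> S \<Longrightarrow> ord h \<le> ord g" unfolding g(2) m_def using Sfin by simp
  have gc: "g \<in> carrier G" "g \<notin> D" using g(1) N_sub unfolding S_def by auto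
  have Ng: "N g = N x" using key[OF x] g(1) unfolding S_def by blast
  have "N x \<subseteq> generate G {g}"
  proof
    fix y assume "y \<in> N x"
    hence "y \<in> N g" using Ng by simp
    then obtain w where w: "w \<in> carrier G" "w \<notin> D" "g \<in> generate G {w}" "y \<in> generate G {w}" "N w = N g"
      using key_w[OF gc] by blast
    have "w \<in> S" unfolding S_def using N_self[OF w(1)] w Ng by simp
    hence le: "ord w \<le> ord g" using gmax by simp
    have sub: "generate G {g} \<subseteq> generate G {w}" using gen_sub w by blast
    have "card (generate G {w}) \<le> card (generate G {g})" using le gen_card w(1) gc(1) by simp
    hence "generate G {g} = generate G {w}"
      using card_seteq[OF finite_subset[OF gen_carrier[OF w(1)] fin] sub] by simp
    thus "y \<in> generate G {g}" using w by simp
  qed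
  moreover have "generate G {g} \<subseteq> N x" using gen_N[OF gc(1)] Ng by simp
  ultimately have eq: "N x = generate G {g}" by blast
  have "ord g = p*n" using gen_card[OF gc(1)] eq[symmetric] notD[OF x] by simp
  thus ?thesis using gc eq by blast
qed

lemma disj:
  assumes x: "x \<in> carrier G" "x \<notin> D" and y: "y \<in> carrier G" "y \<notin> D" and ne: "N x \<noteq> N y"
  shows "N x \<inter> N y = D"
proof
  show "N x \<inter> N y \<subseteq> D"
  proof
    fix z assume z: "z \<in> N x \<inter> N y"
    show "z \<in> D"
    proof (rule ccontr)
      assume zD: "z \<notin> D"
      have "z \<in> N x" "z \<in> N y" using z by auto
      hence "N z = N x" "N z = N y" using key[OF x _ zD] key[OF y _ zD] by auto
      thus False using ne by simp
    qed
  qed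
  show "D \<subseteq> N x \<inter> N y" using D_in_N[OF _ x(1)] D_in_N[OF _ y(1)] by blast
qed

definition "Om = N ` (carrier G - D)"

lemma Om_card: "card Om \<le> p + 1"
proof -
  obtain k where pk: "p = Suc k" using p2 by (cases p) auto
  have k1: "k \<ge> 1" using p2 pk by simp
  have fD: "finite D" using finite_subset[OF D_sub fin] .
  have fOm: "finite Om" unfolding Om_def using fin by simp
  have each: "card (M - D) = k * n" if MO: "M \<in> Om" for M
  proof -
    obtain x where x: "x \<in> carrier G" "x \<notin> D" "M = N x" using MO unfolding Om_def by blast
    have DM: "D \<subseteq> M" using D_in_N[OF _ x(1)] x(3) by blast
    have "card (M - D) + card D = card M" using card_Diff_subset[OF fD DM] card_mono[OF _ DM] N_fin x(3) by simp
    hence "card (M - D) + n = Suc k * n" using notD[OF x(1,2)] x(3) cardD' pk by simp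
    thus ?thesis by simp
  qed
  have dj: "(M - D) \<inter> (M' - D) = {}" if MM: "M \<in> Om" "M' \<in> Om" "M \<noteq> M'" for M M'
  proof -
    obtain x where x: "x \<in> carrier G" "x \<notin> D" "M = N x" using MM(1) unfolding Om_def by blast
    obtain y where y: "y \<in> carrier G" "y \<notin> D" "M' = N y" using MM(2) unfolding Om_def by blast
    have "N x \<inter> N y = D" using disj[OF x(1,2) y(1,2)] MM(3) x(3) y(3) by simp
    thus ?thesis using x(3) y(3) by blast
  qed
  have fin2: "\<forall>M\<in>Om. finite (M - D)" using N_fin unfolding Om_def by blast
  have "card (\<Union>M\<in>Om. M - D) = (\<Sum>M\<in>Om. card (M - D))"
  proof (rule card_UN_disjoint[OF fOm])
    show "\<forall>i\<in>Om. finite (i - D)" using fin2 .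
    show "\<forall>i\<in>Om. \<forall>j\<in>Om. i \<noteq> j \<longrightarrow> (i - D) \<inter> (j - D) = {}"
      using dj by (intro ballI impI) 
  qed
  also have "\<dots> = (\<Sum>M\<in>Om. k * n)" using each by (intro sum.cong) auto
  also have "\<dots> = card Om * (k * n)" by simp
  finally have e1: "card (\<Union>M\<in>Om. M - D) = card Om * (k * n)" .
  have "(\<Union>M\<in>Om. M - D) \<subseteq> carrier G - D" unfolding Om_def using N_sub by blast
  hence "card (\<Union>M\<in>Om. M - D) \<le> card (carrier G - D)" using fin by (simp add: card_mono)
  moreover have "card (carrier G - D) + n = p*p*n"
    using card_Diff_subset[OF fD D_sub] card_mono[OF fin D_sub] cardG cardD' by simp
  ultimately have le: "card Om * (k * n) + n \<le> p*p*n" using e1 by simp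
  have "p*p*n = (Suc (Suc k)) * (k * n) + n" unfolding pk by (simp add: algebra_simps)
  hence l2: "card Om * (k * n) \<le> (Suc (Suc k)) * (k * n)" using le by linarith
  have "k * n > 0" using k1 npos by simp
  hence "card Om \<le> Suc (Suc k)" using l2 mult_le_cancel2 by blast
  thus ?thesis using pk by simp
qed

lemma Om_two:
  obtains x0 x1 where "x0 \<in> carrier G" "x0 \<notin> D" "x1 \<in> carrier G" "x1 \<notin> D" "N x0 \<noteq> N x1"
proof -
  have "n \<le> p*n" using p2 by simp
  hence lt: "card D < card (carrier G)" using cardD' cardG pn_lt by linarith
  have "carrier G - D \<noteq> {}"
  proof
    assume "carrier G - D = {}"
    hence "carrier G \<subseteq> D" by blast
    hence "card (carrier G) \<le> card D" using card_mono[OF finite_subset[OF D_sub fin]] by blast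
    thus False using lt by simp
  qed
  then obtain x0 where x0: "x0 \<in> carrier G" "x0 \<notin> D" by blast
  have "N x0 \<noteq> carrier G" using notD x0 by blast
  then obtain x1 where x1: "x1 \<in> carrier G" "x1 \<notin> N x0" using N_sub by blast
  have "x1 \<notin> D" using D_in_N x0 x1 by blast
  moreover have "N x0 \<noteq> N x1" using N_self x1 by blast
  ultimately show ?thesis using that x0 x1 by blast
qed

end

context group begin

lemma cancel_l1: "x \<in> carrier G \<Longrightarrow> z \<in> carrier G \<Longrightarrow> x \<otimes> (inv x \<otimes> z) = z"
  by (metis inv_closed l_one m_assoc r_inv)

lemma cancel_l2: "x \<in> carrier G \<Longrightarrow> z \<in> carrier G \<Longrightarrow> inv x \<otimes> (x \<otimes> z) = z"
  by (metis inv_closed l_one m_assoc l_inv)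

lemma pow_mod_ord: "x \<in> carrier G \<Longrightarrow> x [^] (k::nat) = x [^] (k mod ord x)"
proof -
  assume x: "x \<in> carrier G"
  have "k = ord x * (k div ord x) + k mod ord x" by simp
  hence "x [^] k = (x [^] ord x) [^] (k div ord x) \<otimes> x [^] (k mod ord x)"
    by (metis x nat_pow_mult nat_pow_pow nat_pow_closed)
  thus ?thesis using x by simp
qed

lemma gen_commute:
  assumes "w \<in> carrier G" "finite (carrier G)" "x \<in> generate G {w}" "y \<in> generate G {w}"
  shows "x \<otimes> y = y \<otimes> x"
proof -
  obtain i j :: nat where "x = w [^] i" "y = w [^] j" using assms gen_nat by auto
  thus ?thesis using assms(1) by (simp add: nat_pow_mult add.commute)
qed

lemma card_sub_dvd:
  assumes "subgroup H G" "subgroup S G" "H \<subseteq> S"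
  shows "card H dvd card S"
proof -
  have cS: "carrier (subgroup_generated G S) = S"
    using subgroup.carrier_subgroup_generated_subgroup[OF assms(2)] .
  have "subgroup H (subgroup_generated G S)"
    using subgroup_of_subgroup_generated assms by blast
  then have "card (rcosets\<^bsub>subgroup_generated G S\<^esub> H) * card H = order (subgroup_generated G S)"
    using group.lagrange[OF group_subgroup_generated] by blast
  thus ?thesis unfolding order_def cS by (metis dvd_triv_right)
qed

definition cj where "cj x S = (\<lambda>s. inv x \<otimes> s \<otimes> x) ` S"

lemma cj_sub: "x \<in> carrier G \<Longrightarrow> S \<subseteq> carrier G \<Longrightarrow> cj x S \<subseteq> carrier G"
  unfolding cj_def by auto

lemma cj_mult:
  assumes "x \<in> carrier G" "y \<in> carrier G" "S \<subseteq> carrier G"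
  shows "cj (x \<otimes> y) S = cj y (cj x S)"
proof -
  have e: "inv (x \<otimes> y) \<otimes> s \<otimes> (x \<otimes> y) = inv y \<otimes> (inv x \<otimes> s \<otimes> x) \<otimes> y" if "s \<in> S" for s
  proof -
    have "s \<in> carrier G" using that assms(3) by blast
    thus ?thesis using assms(1,2) by (simp add: inv_mult_group m_assoc)
  qed
  show ?thesis unfolding cj_def image_image by (rule image_cong[OF refl e])
qed

lemma cj_one: "S \<subseteq> carrier G \<Longrightarrow> cj \<one> S = S"
proof -
  assume S: "S \<subseteq> carrier G"
  have e: "inv \<one> \<otimes> s \<otimes> \<one> = s" if "s \<in> S" for s
  proof -
    have "s \<in> carrier G" using that S by blast
    thus ?thesis by simp
  qed
  have "cj \<one> S = (\<lambda>s. s) ` S" unfolding cj_def by (rule image_cong[OF refl e])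
  thus ?thesis by simp
qed

lemma cj_inv:
  assumes "x \<in> carrier G" "S \<subseteq> carrier G"
  shows "cj (inv x) (cj x S) = S"
  using cj_mult[of x "inv x" S] assms cj_one by simp

lemma cj_inv2:
  assumes "x \<in> carrier G" "S \<subseteq> carrier G"
  shows "cj x (cj (inv x) S) = S"
  using cj_inv[of "inv x" S] assms by simp

lemma cj_subgroup:
  assumes H: "subgroup H G" and m: "m \<in> H"
  shows "cj m H = H"
proof -
  have mc: "m \<in> carrier G" using assms subgroup.subset by blast
  have Hc: "H \<subseteq> carrier G" using assms subgroup.subset by blast
  have sub: "cj x H \<subseteq> H" if xH: "x \<in> H" for x
  proof
    fix t assume "t \<in> cj x H"
    then obtain s where s: "s \<in> H" "t = inv x \<otimes> s \<otimes> x" unfolding cj_def by blast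
    have "inv x \<in> H" by (rule subgroup.m_inv_closed[OF H xH])
    hence "inv x \<otimes> s \<in> H" by (rule subgroup.m_closed[OF H _ s(1)])
    hence "inv x \<otimes> s \<otimes> x \<in> H" by (rule subgroup.m_closed[OF H _ xH])
    thus "t \<in> H" using s(2) by simp
  qed
  have im: "inv m \<in> H" by (rule subgroup.m_inv_closed[OF H m])
  have "H = cj m (cj (inv m) H)" using cj_inv2[OF mc Hc] by simp
  also have "\<dots> \<subseteq> cj m H" using sub[OF im] unfolding cj_def by blast
  finally show ?thesis using sub[OF m] by blast
qed

lemma cj_pow:
  assumes x: "x \<in> carrier G" and w: "w \<in> carrier G"
  shows "inv x \<otimes> w [^] (k::nat) \<otimes> x = (inv x \<otimes> w \<otimes> x) [^] k"
proof (induction k)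
  case 0 then show ?case using assms by simp
next
  case (Suc k)
  have wk: "w [^] k \<in> carrier G" using w by simp
  have "(inv x \<otimes> w [^] k \<otimes> x) \<otimes> (inv x \<otimes> w \<otimes> x) = inv x \<otimes> (w [^] k \<otimes> (x \<otimes> inv x) \<otimes> w) \<otimes> x"
    using x w wk by (simp add: m_assoc cancel_l1)
  also have "\<dots> = inv x \<otimes> (w [^] k \<otimes> w) \<otimes> x" using x wk by simp
  also have "\<dots> = inv x \<otimes> w [^] Suc k \<otimes> x" by simp
  finally have "inv x \<otimes> w [^] Suc k \<otimes> x = (inv x \<otimes> w [^] k \<otimes> x) \<otimes> (inv x \<otimes> w \<otimes> x)" by simp
  also have "\<dots> = (inv x \<otimes> w \<otimes> x) [^] Suc k" using Suc by simp
  finally show ?case .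
qed

lemma cj_gen:
  assumes fin: "finite (carrier G)" and x: "x \<in> carrier G" and w: "w \<in> carrier G"
  shows "cj x (generate G {w}) = generate G {inv x \<otimes> w \<otimes> x}"
proof -
  have c: "inv x \<otimes> w \<otimes> x \<in> carrier G" using assms by simp
  have "(\<lambda>s. inv x \<otimes> s \<otimes> x) ` {w [^] (k::nat) | k. True} = {(inv x \<otimes> w \<otimes> x) [^] (k::nat) | k. True}"
  proof
    show "(\<lambda>s. inv x \<otimes> s \<otimes> x) ` {w [^] (k::nat) | k. True} \<subseteq> {(inv x \<otimes> w \<otimes> x) [^] (k::nat) | k. True}"
      using cj_pow[OF x w] by auto
    show "{(inv x \<otimes> w \<otimes> x) [^] (k::nat) | k. True} \<subseteq> (\<lambda>s. inv x \<otimes> s \<otimes> x) ` {w [^] (k::nat) | k. True}"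
    proof
      fix t assume "t \<in> {(inv x \<otimes> w \<otimes> x) [^] (k::nat) | k. True}"
      then obtain k::nat where k: "t = (inv x \<otimes> w \<otimes> x) [^] k" by blast
      hence "t = inv x \<otimes> w [^] k \<otimes> x" using cj_pow[OF x w] by simp
      moreover have "w [^] k \<in> {w [^] (k::nat) | k. True}" by blast
      ultimately show "t \<in> (\<lambda>s. inv x \<otimes> s \<otimes> x) ` {w [^] (k::nat) | k. True}" by blast
    qed
  qed
  thus ?thesis unfolding cj_def gen_nat[OF fin w] gen_nat[OF fin c] .
qed

lemma cj_card:
  assumes "x \<in> carrier G" "S \<subseteq> carrier G"
  shows "card (cj x S) = card S"
proof -
  have "inj_on (\<lambda>s. inv x \<otimes> s \<otimes> x) S"
    by (rule inj_onI) (use assms in \<open>auto simp: subsetD\<close>)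
  thus ?thesis unfolding cj_def by (simp add: card_image)
qed

lemma cj_pow_stable:
  assumes "z \<in> carrier G" "S \<subseteq> carrier G" "cj z S = S"
  shows "cj (z [^] (j::nat)) S = S"
proof (induction j)
  case 0 then show ?case using cj_one assms by simp
next
  case (Suc j)
  have "cj (z [^] Suc j) S = cj z (cj (z [^] j) S)"
    using cj_mult[of "z [^] j" z S] assms by simp
  then show ?case using Suc assms by simp
qed

lemma orbit_bound:
  assumes fin: "finite (carrier G)" and H: "subgroup H G" and cH: "card H * q = card (carrier G)"
    and cpos: "card H > 0"
  shows "card {cj x H | x. x \<in> carrier G} \<le> q"
proof -
  have Hc: "H \<subseteq> carrier G" using H subgroup.subset by blast
  have lg: "card (rcosets H) * card H = card (carrier G)" using lagrange[OF H] unfolding order_def .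
  hence rc: "card (rcosets H) = q" using cH cpos by (metis mult.commute mult_right_cancel not_gr0)
  define F where "F C = cj (SOME x. x \<in> C) H" for C
  have "{cj x H | x. x \<in> carrier G} \<subseteq> F ` (rcosets H)"
  proof
    fix T assume "T \<in> {cj x H | x. x \<in> carrier G}"
    then obtain x where x: "x \<in> carrier G" "T = cj x H" by blast
    have C: "H #> x \<in> rcosets H" using x by (simp add: rcosetsI Hc)
    have "x \<in> H #> x" using rcos_self[OF x(1) H] .
    hence "(SOME y. y \<in> H #> x) \<in> H #> x" by (rule someI)
    then obtain h where h: "h \<in> H" "(SOME y. y \<in> H #> x) = h \<otimes> x" unfolding r_coset_def by blast
    have hc: "h \<in> carrier G" using h Hc by blast
    have "F (H #> x) = cj (h \<otimes> x) H" unfolding F_def h(2) ..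
    also have "\<dots> = cj x (cj h H)" using cj_mult[OF hc x(1) Hc] .
    also have "\<dots> = T" using cj_subgroup[OF H h(1)] x by simp
    finally show "T \<in> F ` (rcosets H)" using C by force
  qed
  moreover have "finite (rcosets H)"
    using fin by (simp add: RCOSETS_def r_coset_def)
  ultimately have "card {cj x H | x. x \<in> carrier G} \<le> card (F ` (rcosets H))"
    by (simp add: card_mono)
  also have "\<dots> \<le> card (rcosets H)" by (rule card_image_le) (use fin in \<open>simp add: RCOSETS_def\<close>)
  finally show ?thesis using rc by simp
qed

end

context epg_abs begin

lemma cj_N_sub:
  assumes x: "x \<in> carrier G" and y: "y \<in> carrier G"
  shows "cj x (N y) \<subseteq> N (inv x \<otimes> y \<otimes> x)"
proof
  fix t assume "t \<in> cj x (N y)"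
  then obtain z where z: "z \<in> N y" "t = inv x \<otimes> z \<otimes> x" unfolding cj_def by blast
  obtain w where w: "w \<in> carrier G" "y \<in> generate G {w}" "z \<in> generate G {w}"
    using z unfolding Nbh_def by blast
  have "cj x (generate G {w}) = generate G {inv x \<otimes> w \<otimes> x}" using cj_gen[OF fin x w(1)] .
  moreover have "inv x \<otimes> y \<otimes> x \<in> cj x (generate G {w})" "t \<in> cj x (generate G {w})"
    using w z unfolding cj_def by auto
  ultimately show "t \<in> N (inv x \<otimes> y \<otimes> x)" unfolding Nbh_def using w x
    gen_carrier[of "inv x \<otimes> w \<otimes> x"]
    by (auto intro!: bexI[of _ "inv x \<otimes> w \<otimes> x"])
qed

lemma cj_N:
  assumes x: "x \<in> carrier G" and y: "y \<in> carrier G"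
  shows "cj x (N y) = N (inv x \<otimes> y \<otimes> x)"
proof
  show "cj x (N y) \<subseteq> N (inv x \<otimes> y \<otimes> x)" using cj_N_sub[OF x y] .
  let ?y = "inv x \<otimes> y \<otimes> x"
  have yc: "?y \<in> carrier G" using x y by simp
  have "cj (inv x) (N ?y) \<subseteq> N (inv (inv x) \<otimes> ?y \<otimes> inv x)" by (rule cj_N_sub[OF inv_closed[OF x] yc])
  also have "inv (inv x) \<otimes> ?y \<otimes> inv x = y" using x y
    by (simp add: m_assoc cancel_l1)
  finally have "cj x (cj (inv x) (N ?y)) \<subseteq> cj x (N y)" unfolding cj_def by blast
  thus "N ?y \<subseteq> cj x (N y)" using cj_inv2[OF x N_sub] by simp
qed

lemma cj_Om:
  assumes "M \<in> Om" "x \<in> carrier G"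
  shows "cj x M \<in> Om"
proof -
  obtain y where y: "y \<in> carrier G" "y \<notin> D" "M = N y" using assms unfolding Om_def by blast
  let ?y = "inv x \<otimes> y \<otimes> x"
  have yc: "?y \<in> carrier G" using assms y by simp
  have e: "cj x M = N ?y" using cj_N[OF assms(2) y(1)] y by simp
  have "card (N ?y) = card (cj x (N y))" using e y(3) by simp
  also have "\<dots> = card (N y)" by (rule cj_card[OF assms(2) N_sub])
  also have "\<dots> = p * n" using notD[OF y(1,2)] by simp
  finally have "card (N ?y) = p * n" .
  hence "?y \<notin> D" unfolding D_def using cardG pn_lt by auto
  thus ?thesis using e yc unfolding Om_def by blast
qed

end

lemma fermat_nat:
  fixes m p :: nat
  assumes "Factorial_Ring.prime p"
  shows "m ^ p mod p = m mod p"
proof (cases "p dvd m")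
  case True
  have p0: "p > 0" using assms prime_gt_0_nat by blast
  have "m dvd m ^ p" by (rule dvd_power) (use p0 in simp)
  hence "p dvd m ^ p" using True dvd_trans by blast
  thus ?thesis using True by simp
next
  case False
  have "[m ^ (p - 1) = 1] (mod p)" using fermat_theorem[OF assms False] .
  hence "[m * m ^ (p - 1) = m * 1] (mod p)" by (rule cong_scalar_left)
  moreover have "m * m ^ (p - 1) = m ^ p"
    using assms prime_gt_0_nat by (metis Suc_diff_1 power_Suc)
  ultimately show ?thesis unfolding cong_def by simp
qed

context epg_abs begin

lemma p_not_dvd_n: "\<not> p dvd n"
proof
  assume "p dvd n"
  hence "is_unit p" using coprime_common_divisor[OF cop _ dvd_refl] by blast
  thus False using pprime not_prime_unit by blast
qed

lemma pow_gen: "g \<in> carrier G \<Longrightarrow> g [^] (k::nat) \<in> generate G {g}"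
proof -
  assume g: "g \<in> carrier G"
  have "generate G {g} = {g [^] (k::nat) | k. True}" by (rule gen_nat[OF fin g])
  thus ?thesis by auto
qed

lemma norm_commute:
  assumes g: "g \<in> carrier G" and og: "ord g = p * n" and y: "y \<in> carrier G"
    and yp: "y [^] p = \<one>" and st: "cj y (generate G {g}) = generate G {g}"
  shows "(g [^] n) \<otimes> y = y \<otimes> (g [^] n)"
proof -
  define a where "a = g [^] n"
  have ac: "a \<in> carrier G" unfolding a_def using g by simp
  have aM: "a \<in> generate G {g}" unfolding a_def using pow_gen[OF g] .
  have oa: "ord a = p" unfolding a_def using ord_pow[OF g, of n] og npos by simp
  have "inv y \<otimes> a \<otimes> y \<in> cj y (generate G {g})" unfolding cj_def using aM by blast
  hence phM: "inv y \<otimes> a \<otimes> y \<in> generate G {g}" using st by simp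
  then obtain k::nat where k: "inv y \<otimes> a \<otimes> y = g [^] k" using gen_nat[OF fin g] by blast
  have "(inv y \<otimes> a \<otimes> y) [^] p = inv y \<otimes> a [^] p \<otimes> y" using cj_pow[OF y ac] by simp
  also have "a [^] p = \<one>" using pow_ord_eq_1[OF ac] oa by simp
  finally have "(g [^] k) [^] p = \<one>" using y k by simp
  hence "g [^] (k * p) = \<one>" using g by (simp add: nat_pow_pow)
  hence "p * n dvd k * p" using pow_eq_id[OF g] og by simp
  hence "n dvd k" using p2 by (simp add: mult.commute)
  then obtain m where km: "k = n * m" by blast
  have "a [^] m = g [^] (n * m)" unfolding a_def using g by (simp add: nat_pow_pow)
  hence phi: "inv y \<otimes> a \<otimes> y = a [^] m" using k km by simp
  have iter: "inv (y [^] i) \<otimes> a \<otimes> y [^] i = a [^] (m ^ i)" for i :: nat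
  proof (induction i)
    case 0 then show ?case using ac by simp
  next
    case (Suc i)
    have yi: "y [^] i \<in> carrier G" using y by simp
    have "inv (y [^] Suc i) \<otimes> a \<otimes> y [^] Suc i = inv y \<otimes> (inv (y [^] i) \<otimes> a \<otimes> y [^] i) \<otimes> y"
      using y yi ac by (simp add: inv_mult_group m_assoc)
    also have "\<dots> = inv y \<otimes> a [^] (m ^ i) \<otimes> y" using Suc by simp
    also have "\<dots> = (inv y \<otimes> a \<otimes> y) [^] (m ^ i)" using cj_pow[OF y ac] by simp
    also have "\<dots> = a [^] (m * m ^ i)" using phi ac by (simp add: nat_pow_pow)
    finally show ?case by simp
  qed
  have "a = a [^] (m ^ p)" using iter[of p] yp ac by simp
  also have "\<dots> = a [^] (m ^ p mod p)" using pow_mod_ord[OF ac] oa by simp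
  also have "\<dots> = a [^] (m mod p)" using fermat_nat[OF pprime] by simp
  also have "\<dots> = a [^] m" using pow_mod_ord[OF ac, of m] oa by simp
  finally have "inv y \<otimes> a \<otimes> y = a" using phi by simp
  hence "y \<otimes> (inv y \<otimes> a \<otimes> y) = y \<otimes> a" by simp
  hence "a \<otimes> y = y \<otimes> a" using y ac by (simp add: m_assoc cancel_l1)
  thus ?thesis unfolding a_def .
qed

lemma pow_stable:
  assumes y: "y \<in> carrier G" and oy: "ord y = p" and H: "H \<subseteq> carrier G"
    and k: "0 < k" "k < p" and st: "cj (y [^] k) H = H"
  shows "cj y H = H"
proof -
  obtain j where j: "[k * j = 1] (mod p)" using cong_unique_inverse_prime[OF pprime k] by blast
  have "cj ((y [^] k) [^] j) H = H" using cj_pow_stable[OF _ H st] y by simp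
  moreover have "(y [^] k) [^] j = y"
  proof -
    have "(y [^] k) [^] j = y [^] (k * j)" using y by (simp add: nat_pow_pow)
    also have "\<dots> = y [^] (k * j mod p)" using pow_mod_ord[OF y] oy by simp
    also have "k * j mod p = 1" using j p2 unfolding cong_def by simp
    finally show ?thesis using y by simp
  qed
  ultimately show ?thesis by simp
qed

definition "Orb H = {cj x H | x. x \<in> carrier G}"

lemma orb_lemma:
  assumes g: "g \<in> carrier G" and og: "ord g = p * n" and y: "y \<in> carrier G" and oy: "ord y = p"
    and nst: "cj y (generate G {g}) \<noteq> generate G {g}"
  shows "(\<lambda>i. cj (y [^] i) (generate G {g})) ` {..<p} = Orb (generate G {g})"
    and "card ((\<lambda>i. cj (y [^] i) (generate G {g})) ` {..<p}) = p"
proof -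
  let ?M = "generate G {g}"
  let ?f = "\<lambda>i. cj (y [^] i) ?M"
  have Mc: "?M \<subseteq> carrier G" using gen_carrier[OF g] .
  have lt: "?f i \<noteq> ?f j" if ij: "i < j" "j < p" for i j
  proof
    assume eq: "?f i = ?f j"
    have yi: "y [^] i \<in> carrier G" "y [^] (j - i) \<in> carrier G" using y by auto
    have "y [^] j = y [^] (j - i) \<otimes> y [^] i" using y ij by (simp add: nat_pow_mult)
    hence "?f j = cj (y [^] i) (cj (y [^] (j - i)) ?M)" using cj_mult[OF yi(2) yi(1) Mc] by simp
    hence "cj (inv (y [^] i)) (?f i) = cj (y [^] (j - i)) ?M"
      using eq cj_inv[OF yi(1) cj_sub[OF yi(2) Mc]] by simp
    hence "cj (y [^] (j - i)) ?M = ?M" using cj_inv[OF yi(1) Mc] by simp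
    hence "cj y ?M = ?M" using pow_stable[OF y oy Mc, of "j - i"] ij by simp
    thus False using nst by simp
  qed
  have inj: "inj_on ?f {..<p}"
  proof (rule inj_onI)
    fix i j assume "i \<in> {..<p}" "j \<in> {..<p}" "?f i = ?f j"
    thus "i = j" using lt by (metis lessThan_iff linorder_neqE_nat)
  qed
  show cardI: "card (?f ` {..<p}) = p" using card_image[OF inj] by simp
  have sub: "?f ` {..<p} \<subseteq> Orb ?M" unfolding Orb_def using y by auto
  have "Orb ?M \<subseteq> Pow (carrier G)" unfolding Orb_def using cj_sub Mc by blast
  hence finO: "finite (Orb ?M)" using fin by (meson finite_Pow_iff finite_subset)
  have "card ?M * p = card (carrier G)" using gen_card[OF g] og cardG by simp
  moreover have "card ?M > 0" using gen_card[OF g] og p2 npos by simp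
  ultimately have "card (Orb ?M) \<le> p"
    unfolding Orb_def using orbit_bound[OF fin generate_is_subgroup, of "{g}" p] g by simp
  thus "?f ` {..<p} = Orb ?M" using card_seteq[OF finO sub] cardI by simp
qed

end

locale epg_abs2 = epg_abs +
  fixes g0 g1
  assumes g0c: "g0 \<in> carrier G" and g1c: "g1 \<in> carrier G" and g0D: "g0 \<notin> D" and g1D: "g1 \<notin> D"
    and o0: "ord g0 = p*n" and o1: "ord g1 = p*n"
    and N0: "N g0 = generate G {g0}" and N1: "N g1 = generate G {g1}"
    and ne: "generate G {g0} \<noteq> generate G {g1}"
begin

abbreviation "M0 \<equiv> generate G {g0}"
abbreviation "M1 \<equiv> generate G {g1}"

lemma D_eq: "D = M0 \<inter> M1"
  using disj[OF g0c g0D g1c g1D] N0 N1 ne by simp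

lemma D_subgroup: "subgroup D G"
proof -
  have "subgroup M0 G" by (rule generate_is_subgroup) (use g0c in simp)
  moreover have "subgroup M1 G" by (rule generate_is_subgroup) (use g1c in simp)
  ultimately show ?thesis unfolding D_eq by (rule subgroup_Int)
qed

lemma ord_D: "d \<in> D \<Longrightarrow> ord d dvd n"
proof -
  assume d: "d \<in> D"
  have dc: "d \<in> carrier G" using d D_sub by blast
  have "generate G {d} \<subseteq> D" using generate_subgroup_incl[OF _ D_subgroup] d by simp
  hence "card (generate G {d}) dvd card D"
    using card_sub_dvd[OF generate_is_subgroup D_subgroup] dc by simp
  thus ?thesis using gen_card[OF dc] cardD' by simp
qed

definition "c = g0 [^] p"
definition "a = g0 [^] n"
definition "b = g1 [^] n"

lemma cc: "c \<in> carrier G" and ac: "a \<in> carrier G" and bc: "b \<in> carrier G"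
  unfolding c_def a_def b_def using g0c g1c by auto

lemma oc: "ord c = n" unfolding c_def using ord_pow[OF g0c, of p] o0 p2 by simp
lemma oa: "ord a = p" unfolding a_def using ord_pow[OF g0c, of n] o0 npos by simp
lemma ob: "ord b = p" unfolding b_def using ord_pow[OF g1c, of n] o1 npos by simp

lemma D_c: "D = generate G {c}"
proof -
  have "D \<subseteq> generate G {c}"
  proof
    fix d assume d: "d \<in> D"
    hence "d \<in> M0" using D_eq by blast
    then obtain k::nat where k: "d = g0 [^] k" using gen_nat[OF fin g0c] by blast
    have dc: "d \<in> carrier G" using k g0c by simp
    have "d [^] n = \<one>" using pow_eq_id[OF dc] ord_D[OF d] by simp
    hence "g0 [^] (k * n) = \<one>" using k g0c by (simp add: nat_pow_pow)
    hence "p * n dvd k * n" using pow_eq_id[OF g0c] o0 by simp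
    hence "p dvd k" using npos by simp
    then obtain j where "k = p * j" by blast
    hence "d = c [^] j" unfolding c_def using k g0c by (simp add: nat_pow_pow)
    thus "d \<in> generate G {c}" using pow_gen[OF cc] by simp
  qed
  moreover have "card (generate G {c}) \<le> card D" using gen_card[OF cc] oc cardD' by simp
  moreover have "finite (generate G {c})" using finite_subset[OF gen_carrier[OF cc] fin] .
  ultimately show ?thesis using card_seteq by blast
qed

lemma cD: "c \<in> D" using D_c gen_self[OF cc] by simp

lemma D_central: "d \<in> D \<Longrightarrow> y \<in> carrier G \<Longrightarrow> d \<otimes> y = y \<otimes> d"
proof -
  assume d: "d \<in> D" and y: "y \<in> carrier G"
  have "N d = carrier G" using d unfolding D_def by simp
  hence "y \<in> N d" using y by simp
  then obtain w where w: "w \<in> carrier G" "d \<in> generate G {w}" "y \<in> generate G {w}"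
    unfolding Nbh_def by blast
  show ?thesis by (rule gen_commute[OF w(1) fin w(2,3)])
qed

lemma aM0: "a \<in> M0" unfolding a_def using pow_gen[OF g0c] .
lemma bM1: "b \<in> M1" unfolding b_def using pow_gen[OF g1c] .

lemma b_notin: "b \<notin> M0"
proof
  assume "b \<in> M0"
  hence "b \<in> D" using D_eq bM1 by blast
  hence "ord b dvd n" by (rule ord_D)
  hence "p dvd n" using ob by simp
  thus False using p_not_dvd_n by simp
qed

lemma a_notin: "a \<notin> M1"
proof
  assume "a \<in> M1"
  hence "a \<in> D" using D_eq aM0 by blast
  hence "ord a dvd n" by (rule ord_D)
  hence "p dvd n" using oa by simp
  thus False using p_not_dvd_n by simp
qed

lemma b_notin_a: "b \<notin> generate G {a}"
  using b_notin gen_sub[OF g0c aM0] by blast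

lemma M_Om0: "M0 \<in> Om" unfolding Om_def using g0c g0D N0 by force
lemma M_Om1: "M1 \<in> Om" unfolding Om_def using g1c g1D N1 by force

lemma ab_comm: "a \<otimes> b = b \<otimes> a"
proof (rule ccontr)
  assume nc: "a \<otimes> b \<noteq> b \<otimes> a"
  have bp: "b [^] p = \<one>" using ob bc pow_ord_eq_1 by metis
  have ap: "a [^] p = \<one>" using oa ac pow_ord_eq_1 by metis
  have nb: "cj b M0 \<noteq> M0"
  proof
    assume "cj b M0 = M0"
    hence "a \<otimes> b = b \<otimes> a" using norm_commute[OF g0c o0 bc bp] unfolding a_def by simp
    thus False using nc by simp
  qed
  have na: "cj a M1 \<noteq> M1"
  proof
    assume "cj a M1 = M1"
    hence "b \<otimes> a = a \<otimes> b" using norm_commute[OF g1c o1 ac ap] unfolding b_def by simp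
    thus False using nc by simp
  qed
  define B where "B = (\<lambda>i. cj (b [^] i) M0) ` {..<p}"
  define A where "A = (\<lambda>i. cj (a [^] i) M1) ` {..<p}"
  have BO: "B = Orb M0" and cB: "card B = p" unfolding B_def using orb_lemma[OF g0c o0 bc ob nb] by auto
  have AO: "A = Orb M1" and cA: "card A = p" unfolding A_def using orb_lemma[OF g1c o1 ac oa na] by auto
  have M0c: "M0 \<subseteq> carrier G" and M1c: "M1 \<subseteq> carrier G" using gen_carrier g0c g1c by auto
  have M1B: "M1 \<notin> B"
  proof
    assume "M1 \<in> B"
    then obtain i :: nat where i: "cj (b [^] i) M0 = M1" unfolding B_def by blast
    have bi: "b [^] i \<in> carrier G" using bc by simp
    have "b [^] i \<in> M1" unfolding b_def using pow_gen[OF g1c, of "n*i"] g1c by (simp add: nat_pow_pow)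
    hence ibi: "inv (b [^] i) \<in> M1" using subgroup.m_inv_closed[OF generate_is_subgroup] g1c by simp
    have "M0 = cj (inv (b [^] i)) M1" using cj_inv[OF bi M0c] i by simp
    also have "\<dots> = M1" using cj_subgroup[OF generate_is_subgroup ibi] g1c by simp
    finally show False using ne by simp
  qed
  have M0A: "M0 \<notin> A"
  proof
    assume "M0 \<in> A"
    then obtain i :: nat where i: "cj (a [^] i) M1 = M0" unfolding A_def by blast
    have ai: "a [^] i \<in> carrier G" using ac by simp
    have "a [^] i \<in> M0" unfolding a_def using pow_gen[OF g0c, of "n*i"] g0c by (simp add: nat_pow_pow)
    hence iai: "inv (a [^] i) \<in> M0" using subgroup.m_inv_closed[OF generate_is_subgroup] g0c by simp
    have "M1 = cj (inv (a [^] i)) M0" using cj_inv[OF ai M1c] i by simp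
    also have "\<dots> = M0" using cj_subgroup[OF generate_is_subgroup iai] g0c by simp
    finally show False using ne by simp
  qed
  have BOm: "B \<subseteq> Om" unfolding B_def using cj_Om[OF M_Om0] bc by auto
  have AOm: "A \<subseteq> Om" unfolding A_def using cj_Om[OF M_Om1] ac by auto
  have finOm: "finite Om" unfolding Om_def using fin by simp
  have finA: "finite A" and finB: "finite B" unfolding A_def B_def by auto
  have "card (A \<union> B) \<le> card Om" using card_mono[OF finOm] AOm BOm by simp
  hence "card (A \<union> B) \<le> p + 1" using Om_card by simp
  moreover have "card A + card B = card (A \<union> B) + card (A \<inter> B)" using card_Un_Int[OF finA finB] .
  ultimately have "card (A \<inter> B) > 0" using cA cB p2 by simp
  hence "A \<inter> B \<noteq> {}" by auto
  then obtain S where S: "S \<in> A" "S \<in> B" by blast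
  obtain x where x: "x \<in> carrier G" "S = cj x M1" using S(1) AO unfolding Orb_def by blast
  obtain z where z: "z \<in> carrier G" "S = cj z M0" using S(2) BO unfolding Orb_def by blast
  have "M1 = cj (inv x) S" using cj_inv[OF x(1) M1c] x(2) by simp
  also have "\<dots> = cj (inv x) (cj z M0)" using z(2) by simp
  also have "\<dots> = cj (z \<otimes> inv x) M0" using cj_mult[OF z(1) inv_closed[OF x(1)] M0c] by simp
  finally have "M1 \<in> Orb M0" unfolding Orb_def using z(1) x(1) by blast
  thus False using M1B BO by simp
qed

end

context group begin

lemma comm_pow_right:
  assumes x: "x \<in> carrier G" and y: "y \<in> carrier G" and c: "x \<otimes> y = y \<otimes> x"
  shows "x \<otimes> y [^] (j::nat) = y [^] j \<otimes> x"
proof (induction j)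
  case 0 then show ?case using x by simp
next
  case (Suc j)
  have yj: "y [^] j \<in> carrier G" using y by simp
  have "x \<otimes> y [^] Suc j = (x \<otimes> y [^] j) \<otimes> y" using x y yj by (simp add: m_assoc)
  also have "\<dots> = y [^] j \<otimes> (x \<otimes> y)" using Suc x y yj by (simp add: m_assoc)
  also have "\<dots> = y [^] j \<otimes> (y \<otimes> x)" using c by simp
  also have "\<dots> = y [^] Suc j \<otimes> x" using x y yj by (simp add: m_assoc)
  finally show ?case .
qed

lemma comm_pow:
  assumes x: "x \<in> carrier G" and y: "y \<in> carrier G" and c: "x \<otimes> y = y \<otimes> x"
  shows "x [^] (i::nat) \<otimes> y [^] (j::nat) = y [^] j \<otimes> x [^] i"
proof -
  have yj: "y [^] j \<in> carrier G" using y by simp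
  have c1: "x \<otimes> y [^] j = y [^] j \<otimes> x" by (rule comm_pow_right[OF x y c])
  have "y [^] j \<otimes> x [^] i = x [^] i \<otimes> y [^] j"
    by (rule comm_pow_right[OF yj x]) (use c1 in simp)
  thus ?thesis by simp
qed

lemma swap_in:
  assumes "x \<in> carrier G" "y \<in> carrier G" "z \<in> carrier G" "x \<otimes> y = y \<otimes> x"
  shows "x \<otimes> (y \<otimes> z) = y \<otimes> (x \<otimes> z)"
proof -
  have "x \<otimes> (y \<otimes> z) = (x \<otimes> y) \<otimes> z" using assms(1-3) by (simp add: m_assoc)
  also have "\<dots> = (y \<otimes> x) \<otimes> z" using assms by simp
  also have "\<dots> = y \<otimes> (x \<otimes> z)" using assms(1-3) by (simp add: m_assoc)
  finally show ?thesis .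
qed

lemma rearr:
  assumes c: "A \<in> carrier G" "B \<in> carrier G" "C \<in> carrier G" "A' \<in> carrier G" "B' \<in> carrier G" "C' \<in> carrier G"
    and c1: "C \<otimes> A' = A' \<otimes> C" and c2: "C \<otimes> B' = B' \<otimes> C" and c3: "B \<otimes> A' = A' \<otimes> B"
  shows "(A \<otimes> B \<otimes> C) \<otimes> (A' \<otimes> B' \<otimes> C') = (A \<otimes> A') \<otimes> (B \<otimes> B') \<otimes> (C \<otimes> C')"
proof -
  have "(A \<otimes> B \<otimes> C) \<otimes> (A' \<otimes> B' \<otimes> C') = A \<otimes> (B \<otimes> (C \<otimes> (A' \<otimes> (B' \<otimes> C'))))"
    using c by (simp add: m_assoc)
  also have "C \<otimes> (A' \<otimes> (B' \<otimes> C')) = A' \<otimes> (C \<otimes> (B' \<otimes> C'))"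
    using swap_in[OF c(3) c(4) _ c1] c by simp
  also have "C \<otimes> (B' \<otimes> C') = B' \<otimes> (C \<otimes> C')"
    using swap_in[OF c(3) c(5) _ c2] c by simp
  also have "B \<otimes> (A' \<otimes> (B' \<otimes> (C \<otimes> C'))) = A' \<otimes> (B \<otimes> (B' \<otimes> (C \<otimes> C')))"
    using swap_in[OF c(2) c(4) _ c3] c by simp
  also have "A \<otimes> (A' \<otimes> (B \<otimes> (B' \<otimes> (C \<otimes> C')))) = (A \<otimes> A') \<otimes> (B \<otimes> B') \<otimes> (C \<otimes> C')"
    using c by (simp add: m_assoc)
  finally show ?thesis .
qed

lemma gen_pow_closed:
  assumes fin: "finite (carrier G)" and a: "a \<in> carrier G" and x: "x \<in> generate G {a}"
  shows "x [^] (t::nat) \<in> generate G {a}"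
proof -
  have g: "generate G {a} = {a [^] (k::nat) | k. True}" by (rule gen_nat[OF fin a])
  then obtain k::nat where k: "x = a [^] k" using x by blast
  have "x [^] t = a [^] (k * t)" using k a by (simp add: nat_pow_pow)
  thus ?thesis using g by blast
qed

lemma iso_from_gens:
  fixes p n :: nat
  assumes fin: "finite (carrier G)" and pprime: "Factorial_Ring.prime p" and npos: "n > 0"
    and pn: "\<not> p dvd n" and cardG: "card (carrier G) = p * p * n"
    and ac: "a \<in> carrier G" and bc: "b \<in> carrier G" and cc: "c \<in> carrier G"
    and oa: "ord a = p" and ob: "ord b = p" and oc: "ord c = n"
    and ab: "a \<otimes> b = b \<otimes> a" and ca: "c \<otimes> a = a \<otimes> c" and cb: "c \<otimes> b = b \<otimes> c"
    and bna: "b \<notin> generate G {a}"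
  shows "G \<cong> Zppn p n"
proof -
  let ?K = "Zppn p n"
  have p0: "p > 0" using pprime prime_gt_0_nat by blast
  have p2: "p \<ge> 2" using pprime prime_ge_2_nat by blast
  have cK: "carrier ?K = {0..<int p} \<times> ({0..<int p} \<times> {0..<int n})"
    unfolding Zppn_def using p0 npos by (simp add: carrier_integer_mod_group)
  have gK: "group ?K" unfolding Zppn_def by (intro DirProd_group group_integer_mod_group)
  define h where "h u = a [^] nat (fst u) \<otimes> b [^] nat (fst (snd u)) \<otimes> c [^] nat (snd (snd u))" for u
  have hc: "h u \<in> carrier G" for u unfolding h_def using ac bc cc by simp
  have hom: "h \<in> hom ?K G"
  proof (rule homI)
    fix u assume "u \<in> carrier ?K" thus "h u \<in> carrier G" using hc by simp
  next
    fix u v assume u: "u \<in> carrier ?K" and v: "v \<in> carrier ?K"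
    obtain i j k where ijk: "u = (i, j, k)" by (cases u) auto
    obtain i' j' k' where ijk': "v = (i', j', k')" by (cases v) auto
    have r: "0 \<le> i" "i < p" "0 \<le> j" "j < p" "0 \<le> k" "k < n" using u ijk cK by auto
    have r': "0 \<le> i'" "i' < p" "0 \<le> j'" "j' < p" "0 \<le> k'" "k' < n" using v ijk' cK by auto
    have uv: "u \<otimes>\<^bsub>?K\<^esub> v = ((i + i') mod p, (j + j') mod p, (k + k') mod n)"
      unfolding ijk ijk' Zppn_def by simp
    have e1: "nat ((i + i') mod int p) = (nat i + nat i') mod p" using r r' by (simp add: nat_mod_distrib nat_add_distrib)
    have e2: "nat ((j + j') mod int p) = (nat j + nat j') mod p" using r r' by (simp add: nat_mod_distrib nat_add_distrib)
    have e3: "nat ((k + k') mod int n) = (nat k + nat k') mod n" using r r' by (simp add: nat_mod_distrib nat_add_distrib)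
    have "h (u \<otimes>\<^bsub>?K\<^esub> v) = a [^] ((nat i + nat i') mod p) \<otimes> b [^] ((nat j + nat j') mod p) \<otimes> c [^] ((nat k + nat k') mod n)"
      unfolding uv h_def using e1 e2 e3 by simp
    also have "\<dots> = a [^] (nat i + nat i') \<otimes> b [^] (nat j + nat j') \<otimes> c [^] (nat k + nat k')"
    proof -
      have "a [^] (nat i + nat i') = a [^] ((nat i + nat i') mod ord a)" by (rule pow_mod_ord[OF ac])
      moreover have "b [^] (nat j + nat j') = b [^] ((nat j + nat j') mod ord b)" by (rule pow_mod_ord[OF bc])
      moreover have "c [^] (nat k + nat k') = c [^] ((nat k + nat k') mod ord c)" by (rule pow_mod_ord[OF cc])
      ultimately show ?thesis unfolding oa ob oc by simp
    qed
    also have "\<dots> = (a [^] nat i \<otimes> a [^] nat i') \<otimes> (b [^] nat j \<otimes> b [^] nat j') \<otimes> (c [^] nat k \<otimes> c [^] nat k')"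
      using ac bc cc by (simp add: nat_pow_mult)
    also have "\<dots> = h u \<otimes> h v" unfolding h_def ijk ijk' fst_conv snd_conv
      by (rule rearr[symmetric, OF _ _ _ _ _ _ comm_pow[OF cc ac ca] comm_pow[OF cc bc cb] comm_pow[OF bc ac ab[symmetric]]])
        (use ac bc cc in simp_all)
    finally show "h (u \<otimes>\<^bsub>?K\<^esub> v) = h u \<otimes> h v" .
  qed
  have ghom: "group_hom ?K G h"
    unfolding group_hom_def group_hom_axioms_def using gK hom is_group by simp
  have inj: "inj_on h (carrier ?K)"
  proof (subst group_hom.inj_on_one_iff[OF ghom], intro allI impI)
    fix u assume u: "u \<in> carrier ?K" and hu: "h u = \<one>"
    obtain i j k where ijk: "u = (i, j, k)" by (cases u) auto
    have r: "0 \<le> i" "i < p" "0 \<le> j" "j < p" "0 \<le> k" "k < n" using u ijk cK by auto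
    define I J L where "I = nat i" "J = nat j" "L = nat k"
    have IJL: "I < p" "J < p" "L < n" using r unfolding I_J_L_def by auto
    have aI: "a [^] I \<in> carrier G" and bJ: "b [^] J \<in> carrier G" and cL: "c [^] L \<in> carrier G"
      using ac bc cc by auto
    have h1: "a [^] I \<otimes> b [^] J \<otimes> c [^] L = \<one>" using hu unfolding h_def ijk I_J_L_def by simp
    have ca1: "c [^] L \<otimes> a [^] I = a [^] I \<otimes> c [^] L" by (rule comm_pow[OF cc ac ca])
    have cb1: "c [^] L \<otimes> b [^] J = b [^] J \<otimes> c [^] L" by (rule comm_pow[OF cc bc cb])
    have "c [^] L \<otimes> (a [^] I \<otimes> b [^] J) = a [^] I \<otimes> (c [^] L \<otimes> b [^] J)"
      by (rule swap_in[OF cL aI bJ ca1])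
    also have "\<dots> = (a [^] I \<otimes> b [^] J) \<otimes> c [^] L" unfolding cb1 using aI bJ cL by (simp add: m_assoc)
    finally have cab: "(a [^] I \<otimes> b [^] J) \<otimes> c [^] L = c [^] L \<otimes> (a [^] I \<otimes> b [^] J)" by simp
    have "\<one> = (a [^] I \<otimes> b [^] J \<otimes> c [^] L) [^] n" using h1 by simp
    also have "\<dots> = (a [^] I \<otimes> b [^] J) [^] n \<otimes> (c [^] L) [^] n"
      by (rule pow_mult_distrib[OF cab]) (use aI bJ cL in simp_all)
    also have "(c [^] L) [^] n = \<one>"
    proof -
      have "(c [^] L) [^] n = (c [^] n) [^] L" using cc by (simp add: nat_pow_pow mult.commute)
      also have "c [^] n = \<one>" using pow_ord_eq_1[OF cc] oc by simp
      finally show ?thesis by simp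
    qed
    also have "(a [^] I \<otimes> b [^] J) [^] n = (a [^] I) [^] n \<otimes> (b [^] J) [^] n"
      by (rule pow_mult_distrib) (use comm_pow[OF ac bc] ab aI bJ in simp_all)
    finally have e: "(a [^] I) [^] n \<otimes> (b [^] J) [^] n = \<one>" using aI bJ by simp
    have "J = 0"
    proof (rule ccontr)
      assume J0: "J \<noteq> 0"
      have x1: "(a [^] I) [^] n \<in> carrier G" and y1: "(b [^] J) [^] n \<in> carrier G" using aI bJ by auto
      have "(b [^] J) [^] n = inv ((a [^] I) [^] n) \<otimes> ((a [^] I) [^] n \<otimes> (b [^] J) [^] n)"
        using cancel_l2[OF x1 y1] by simp
      hence "(b [^] J) [^] n = inv ((a [^] I) [^] n)" using e x1 by simp
      moreover have "inv ((a [^] I) [^] n) \<in> generate G {a}"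
      proof -
        have "(a [^] I) [^] n \<in> generate G {a}" using gen_nat[OF fin ac] ac by (auto simp: nat_pow_pow)
        thus ?thesis using subgroup.m_inv_closed[OF generate_is_subgroup] ac by simp
      qed
      ultimately have bm: "b [^] (J * n) \<in> generate G {a}" using bc by (simp add: nat_pow_pow)
      have "coprime (J * n) p"
      proof -
        have "\<not> p dvd J"
        proof
          assume "p dvd J" hence "p \<le> J" using J0 by (simp add: dvd_imp_le)
          thus False using IJL by simp
        qed
        hence "\<not> p dvd J * n" using pn prime_dvd_mult_iff[OF pprime] by blast
        hence "coprime p (J * n)" by (rule prime_imp_coprime[OF pprime])
        thus ?thesis by (rule iffD1[OF coprime_commute])
      qed
      hence "\<exists>t. [(J * n) * t = Suc 0] (mod p)" by (rule cong_solve_coprime_nat)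
      then obtain t where t: "[(J * n) * t = Suc 0] (mod p)" by (rule exE)
      have "(b [^] (J * n)) [^] t \<in> generate G {a}" by (rule gen_pow_closed[OF fin ac bm])
      moreover have "(b [^] (J * n)) [^] t = b"
      proof -
        have "(b [^] (J * n)) [^] t = b [^] (J * n * t)" using bc by (simp add: nat_pow_pow)
        also have "\<dots> = b [^] ((J * n * t) mod ord b)" by (rule pow_mod_ord[OF bc])
        also have "\<dots> = b [^] ((J * n * t) mod p)" unfolding ob ..
        also have "(J * n * t) mod p = 1" using t p2 unfolding cong_def by simp
        finally show ?thesis using bc by simp
      qed
      ultimately show False using bna by simp
    qed
    have "(a [^] I) [^] n = \<one>" using e \<open>J = 0\<close> aI by simp
    hence "a [^] (I * n) = \<one>" using ac by (simp add: nat_pow_pow)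
    hence "p dvd I * n" using pow_eq_id[OF ac] oa by simp
    hence "p dvd I" using pn pprime by (simp add: prime_dvd_mult_iff)
    hence I0: "I = 0" using IJL by (auto dest: dvd_imp_le)
    have "c [^] L = \<one>" using h1 I0 \<open>J = 0\<close> cL by simp
    hence "n dvd L" using pow_eq_id[OF cc] oc by simp
    hence L0: "L = 0" using IJL by (auto dest: dvd_imp_le)
    have "i = 0" "j = 0" "k = 0" using I0 \<open>J = 0\<close> L0 r unfolding I_J_L_def by auto
    thus "u = \<one>\<^bsub>?K\<^esub>" unfolding ijk Zppn_def by simp
  qed
  have cardK: "card (carrier ?K) = p * p * n" unfolding cK by (simp add: card_cartesian_product)
  have sub: "h ` carrier ?K \<subseteq> carrier G" using hc by auto
  have "card (h ` carrier ?K) = card (carrier G)" using card_image[OF inj] cardK cardG by simp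
  hence "h ` carrier ?K = carrier G" using card_seteq[OF fin sub] by simp
  hence "bij_betw h (carrier ?K) (carrier G)" using inj unfolding bij_betw_def by simp
  hence "h \<in> iso ?K G" unfolding iso_def using hom by simp
  hence "?K \<cong> G" unfolding is_iso_def by blast
  thus ?thesis using group.iso_sym[OF gK] by blast
qed

end

lemma pow_DirProd: "pow (G \<times>\<times> H) (x, y) (k::nat) = (pow G x k, pow H y k)"
  by (induction k) simp_all

locale Kctx =
  fixes p n :: nat
  assumes pprime: "Factorial_Ring.prime p" and npos: "n > 0" and cop: "coprime n p"
begin

abbreviation "K \<equiv> Zppn p n"

lemma p2: "p \<ge> 2" using pprime prime_ge_2_nat by blast

lemma gK: "group K" unfolding Zppn_def by (intro DirProd_group group_integer_mod_group)

lemma cK: "carrier K = {0..<int p} \<times> ({0..<int p} \<times> {0..<int n})"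
  unfolding Zppn_def using p2 npos by (simp add: carrier_integer_mod_group)

lemma finK: "finite (carrier K)" unfolding cK by simp

lemma cardK: "card (carrier K) = p * p * n" unfolding cK by (simp add: card_cartesian_product)

lemma powK: "pow K (x, y, z) (k::nat) = ((int k * x) mod int p, (int k * y) mod int p, (int k * z) mod int n)"
  unfolding Zppn_def by (simp add: pow_DirProd)

lemma genK: "w \<in> carrier K \<Longrightarrow> generate K {w} = {pow K w (k::nat) | k. True}"
  using group.gen_nat[OF gK finK] by blast

lemma crt: "\<exists>k::nat. k mod p = a mod p \<and> k mod n = b mod n"
proof -
  have "coprime p n" using cop by (simp add: coprime_commute)
  then obtain k where "[k = a] (mod p) \<and> [k = b] (mod n)" using binary_chinese_remainder_nat by blast
  thus ?thesis unfolding cong_def by blast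
qed

lemma line_sub:
  assumes u: "(x, y, z) \<in> carrier K" and l: "0 \<le> l" "l < int p" and z': "0 \<le> z'" "z' < int n"
  shows "((l * x) mod int p, (l * y) mod int p, z') \<in> Nbh K (x, y, z)"
proof -
  have r: "0 \<le> x" "x < int p" "0 \<le> y" "y < int p" "0 \<le> z" "z < int n" using u cK by auto
  define w where "w = (x, y, 1 mod int n)"
  have wc: "w \<in> carrier K" unfolding w_def cK using r npos by auto
  obtain k1 :: nat where k1: "k1 mod p = 1 mod p" "k1 mod n = nat z mod n" using crt by blast
  obtain k2 :: nat where k2: "k2 mod p = nat l mod p" "k2 mod n = nat z' mod n" using crt by blast
  have "int k1 mod int p = int (k1 mod p)" by (simp add: zmod_int)
  hence a1: "int k1 mod int p = 1" using k1(1) p2 by simp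
  have "int k1 mod int n = int (k1 mod n)" by (simp add: zmod_int)
  hence a2: "int k1 mod int n = z" using k1(2) r by simp
  have "int k2 mod int p = int (k2 mod p)" by (simp add: zmod_int)
  hence b1: "int k2 mod int p = l" using k2(1) l by simp
  have "int k2 mod int n = int (k2 mod n)" by (simp add: zmod_int)
  hence b2: "int k2 mod int n = z'" using k2(2) z' by simp
  have m1: "(int k * t) mod int m = ((int k mod int m) * t) mod int m" for k m t
    by (simp add: mod_mult_left_eq)
  have m2: "(int k * (1 mod int n)) mod int n = int k mod int n" for k
    by (simp add: mod_mult_right_eq)
  have "pow K w k1 = (x, y, z)"
    unfolding w_def powK using m1[where k=k1 and m=p and t=x] m1[where k=k1 and m=p and t=y] a1 a2 m2[of k1] r by simp
  moreover have "pow K w k2 = ((l * x) mod int p, (l * y) mod int p, z')"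
    unfolding w_def powK using m1[where k=k2 and m=p and t=x] m1[where k=k2 and m=p and t=y] b1 b2 m2[of k2] by simp
  moreover have memg: "v = pow K w k \<Longrightarrow> v \<in> generate K {w}" for v and k :: nat
    unfolding genK[OF wc] by blast
  ultimately have "(x, y, z) \<in> generate K {w}" "((l * x) mod int p, (l * y) mod int p, z') \<in> generate K {w}"
    by (metis memg)+
  moreover have "((l * x) mod int p, (l * y) mod int p, z') \<in> carrier K" unfolding cK using p2 z' by auto
  ultimately show ?thesis unfolding Nbh_def using wc by blast
qed

lemma key_mod:
  fixes A B C W P :: int
  assumes "(A * B) mod P = 1"
  shows "((C * A) mod P * ((B * W) mod P)) mod P = (C * W) mod P"
proof -
  have "((C * A) mod P * ((B * W) mod P)) mod P = ((C * A) * (B * W)) mod P" by (rule mod_mult_eq)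
  also have "(C * A) * (B * W) = (C * W) * (A * B)" by (simp add: ac_simps)
  also have "((C * W) * (A * B)) mod P = ((C * W) * ((A * B) mod P)) mod P" by (rule mod_mult_right_eq[symmetric])
  also have "\<dots> = (C * W) mod P" using assms by simp
  finally show ?thesis .
qed

lemma line_sup:
  assumes u: "(x, y, z) \<in> carrier K" and nz: "x \<noteq> 0 \<or> y \<noteq> 0" and v: "v \<in> Nbh K (x, y, z)"
  shows "\<exists>l z'. 0 \<le> l \<and> l < int p \<and> 0 \<le> z' \<and> z' < int n \<and> v = ((l * x) mod int p, (l * y) mod int p, z')"
proof -
  obtain w where wc: "w \<in> carrier K" and uw: "(x, y, z) \<in> generate K {w}" and vw: "v \<in> generate K {w}"
    using v unfolding Nbh_def by blast
  obtain w1 w2 w3 where w: "w = (w1, w2, w3)" by (cases w) auto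
  obtain k1 :: nat where k1: "(x, y, z) = pow K w k1" using uw genK[OF wc] by blast
  obtain k2 :: nat where k2: "v = pow K w k2" using vw genK[OF wc] by blast
  have x: "x = (int k1 * w1) mod int p" and y: "y = (int k1 * w2) mod int p" using k1 unfolding w powK by auto
  have v': "v = ((int k2 * w1) mod int p, (int k2 * w2) mod int p, (int k2 * w3) mod int n)"
    using k2 unfolding w powK .
  have "\<not> p dvd k1"
  proof
    assume "p dvd k1"
    hence "int p dvd int k1" by simp
    hence "x = 0" "y = 0" unfolding x y by auto
    thus False using nz by simp
  qed
  hence "coprime p k1" by (rule prime_imp_coprime[OF pprime])
  hence "coprime k1 p" by (rule iffD1[OF coprime_commute])
  hence "\<exists>i. [k1 * i = Suc 0] (mod p)" by (rule cong_solve_coprime_nat)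
  then obtain i where i: "[k1 * i = Suc 0] (mod p)" by (rule exE)
  have "(k1 * i) mod p = 1" using i p2 unfolding cong_def by simp
  hence "int ((k1 * i) mod p) = 1" by simp
  hence AB: "(int i * int k1) mod int p = 1" by (simp add: zmod_int mult.commute)
  define l where "l = (int k2 * int i) mod int p"
  have l: "0 \<le> l" "l < int p" unfolding l_def using p2 by auto
  have "(l * x) mod int p = (int k2 * w1) mod int p" unfolding l_def x by (rule key_mod[OF AB])
  moreover have "(l * y) mod int p = (int k2 * w2) mod int p" unfolding l_def y by (rule key_mod[OF AB])
  moreover have "0 \<le> (int k2 * w3) mod int n" "(int k2 * w3) mod int n < int n" using npos by auto
  ultimately show ?thesis using l v' by auto
qed

lemma line_inj:
  assumes r: "0 \<le> x" "x < int p" "0 \<le> y" "y < int p" and nz: "x \<noteq> 0 \<or> y \<noteq> 0"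
  shows "inj_on (\<lambda>(l, z'). ((l * x) mod int p, (l * y) mod int p, z')) ({0..<int p} \<times> {0..<int n})"
proof (rule inj_onI)
  fix a b assume a: "a \<in> {0..<int p} \<times> {0..<int n}" and b: "b \<in> {0..<int p} \<times> {0..<int n}"
    and eq: "(\<lambda>(l, z'). ((l * x) mod int p, (l * y) mod int p, z')) a = (\<lambda>(l, z'). ((l * x) mod int p, (l * y) mod int p, z')) b"
  obtain l z1 where a': "a = (l, z1)" by (cases a) auto
  obtain l' z2 where b': "b = (l', z2)" by (cases b) auto
  have rl: "0 \<le> l" "l < int p" "0 \<le> l'" "l' < int p" using a b a' b' by auto
  have e1: "(l * x) mod int p = (l' * x) mod int p" and e2: "(l * y) mod int p = (l' * y) mod int p"
    and e3: "z1 = z2" using eq a' b' by auto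
  have pi: "Factorial_Ring.prime (int p)" using pprime by (simp add: prime_nat_int_transfer)
  have gen: "int p dvd l - l'" if t: "0 \<le> t" "t < int p" "t \<noteq> 0" and et: "(l * t) mod int p = (l' * t) mod int p" for t
  proof -
    have "int p dvd l * t - l' * t" using et by (simp add: mod_eq_dvd_iff)
    hence "int p dvd (l - l') * t" by (simp add: left_diff_distrib)
    hence "int p dvd (l - l') \<or> int p dvd t" using pi by (simp add: prime_dvd_mult_iff)
    moreover have "\<not> int p dvd t"
    proof
      assume "int p dvd t"
      hence "int p \<le> t" using t by (simp add: zdvd_imp_le)
      thus False using t by simp
    qed
    ultimately show ?thesis by blast
  qed
  have "int p dvd l - l'" using nz gen[OF r(1,2) _ e1] gen[OF r(3,4) _ e2] by blast
  hence "l mod int p = l' mod int p" by (simp add: mod_eq_dvd_iff)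
  hence "l = l'" using rl by simp
  thus "a = b" using a' b' e3 by simp
qed

lemma card_line:
  assumes u: "(x, y, z) \<in> carrier K" and nz: "x \<noteq> 0 \<or> y \<noteq> 0"
  shows "card (Nbh K (x, y, z)) = p * n"
proof -
  let ?f = "\<lambda>(l, z'). ((l * x) mod int p, (l * y) mod int p, z')"
  have r: "0 \<le> x" "x < int p" "0 \<le> y" "y < int p" using u cK by auto
  have "Nbh K (x, y, z) = ?f ` ({0..<int p} \<times> {0..<int n})"
  proof
    show "Nbh K (x, y, z) \<subseteq> ?f ` ({0..<int p} \<times> {0..<int n})"
    proof
      fix v assume "v \<in> Nbh K (x, y, z)"
      then obtain l z' where "0 \<le> l" "l < int p" "0 \<le> z'" "z' < int n"
          "v = ((l * x) mod int p, (l * y) mod int p, z')"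
        using line_sup[OF u nz] by blast
      thus "v \<in> ?f ` ({0..<int p} \<times> {0..<int n})" by force
    qed
    show "?f ` ({0..<int p} \<times> {0..<int n}) \<subseteq> Nbh K (x, y, z)"
      using line_sub[OF u] by auto
  qed
  also have "card \<dots> = card ({0..<int p} \<times> {0..<int n})" by (rule card_image[OF line_inj[OF r nz]])
  also have "\<dots> = p * n" by (simp add: card_cartesian_product)
  finally show ?thesis .
qed

definition "Zs = (\<lambda>z. (0::int, 0::int, z)) ` {0..<int n}"

lemma Zs_D: "u \<in> Zs \<Longrightarrow> Nbh K u = carrier K"
proof -
  assume "u \<in> Zs"
  then obtain z where z: "0 \<le> z" "z < int n" "u = (0, 0, z)" unfolding Zs_def by auto
  show "Nbh K u = carrier K"
  proof
    show "Nbh K u \<subseteq> carrier K" unfolding Nbh_def by auto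
    show "carrier K \<subseteq> Nbh K u"
    proof
      fix v assume v: "v \<in> carrier K"
      obtain x y z2 where v': "v = (x, y, z2)" by (cases v) auto
      have "((0 * x) mod int p, (0 * y) mod int p, z) \<in> Nbh K (x, y, z2)"
        by (rule line_sub) (use v v' z p2 in auto)
      hence "u \<in> Nbh K v" using z v' by simp
      thus "v \<in> Nbh K u" using v unfolding Nbh_def by blast
    qed
  qed
qed

lemma KD: "{u \<in> carrier K. Nbh K u = carrier K} = Zs"
proof
  show "Zs \<subseteq> {u \<in> carrier K. Nbh K u = carrier K}"
  proof
    fix u assume u: "u \<in> Zs"
    have "u \<in> carrier K" using u unfolding Zs_def cK using p2 by auto
    thus "u \<in> {u \<in> carrier K. Nbh K u = carrier K}" using Zs_D[OF u] by simp
  qed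
  show "{u \<in> carrier K. Nbh K u = carrier K} \<subseteq> Zs"
  proof
    fix u assume u: "u \<in> {u \<in> carrier K. Nbh K u = carrier K}"
    obtain x y z where u': "u = (x, y, z)" by (cases u) auto
    have uc: "(x, y, z) \<in> carrier K" using u u' by simp
    have "x = 0 \<and> y = 0"
    proof (rule ccontr)
      assume "\<not> (x = 0 \<and> y = 0)"
      hence "card (Nbh K (x, y, z)) = p * n" using card_line[OF uc] by blast
      moreover have "Nbh K (x, y, z) = carrier K" using u u' by simp
      ultimately have c1: "card (carrier K) = p * n" by simp
      have "p * n < p * p * n" using p2 npos by simp
      thus False using c1 cardK by linarith
    qed
    thus "u \<in> Zs" using uc u' unfolding Zs_def cK by auto
  qed
qed

lemma card_KD: "card {u \<in> carrier K. Nbh K u = carrier K} = n"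
proof -
  have "inj_on (\<lambda>z. (0::int, 0::int, z)) {0..<int n}" by (rule inj_onI) simp
  hence "card Zs = card {0..<int n}" unfolding Zs_def by (rule card_image)
  thus ?thesis using KD by simp
qed

lemma KN: "u \<in> carrier K \<Longrightarrow> Nbh K u \<noteq> carrier K \<Longrightarrow> card (Nbh K u) = p * n"
proof -
  assume u: "u \<in> carrier K" and ne: "Nbh K u \<noteq> carrier K"
  obtain x y z where u': "u = (x, y, z)" by (cases u) auto
  have "u \<notin> Zs" using Zs_D ne by blast
  hence "x \<noteq> 0 \<or> y \<noteq> 0" using u u' unfolding Zs_def cK by auto
  thus ?thesis using card_line u u' by simp
qed

end

lemma adj_char:
  assumes "group G" "finite (carrier G)"
  shows "epg_adj G x y \<longleftrightarrow> x \<in> carrier G \<and> y \<in> carrier G \<and> x \<noteq> y \<and>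
     (\<exists>w\<in>carrier G. x \<in> generate G {w} \<and> y \<in> generate G {w})"
  unfolding epg_adj_def using group.cyclic_char[OF assms(1) assms(2)] by blast

lemma Nbh_adj:
  assumes "group G" "finite (carrier G)" "x \<in> carrier G"
  shows "Nbh G x = {y \<in> carrier G. y = x \<or> epg_adj G x y}"
proof -
  have "x \<in> generate G {x}" using group.gen_self[OF assms(1) assms(3)] .
  thus ?thesis unfolding Nbh_def adj_char[OF assms(1,2)] using assms(3) by blast
qed

lemma Nbh_transfer:
  fixes G :: "('a, 'b) monoid_scheme" and H :: "('c, 'd) monoid_scheme"
  assumes gG: "group G" "finite (carrier G)" and gH: "group H" "finite (carrier H)"
    and bij: "bij_betw f (carrier G) (carrier H)"
    and adj: "\<forall>x\<in>carrier G. \<forall>y\<in>carrier G. epg_adj G x y \<longleftrightarrow> epg_adj H (f x) (f y)"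
    and x: "x \<in> carrier G"
  shows "f ` Nbh G x = Nbh H (f x)"
proof -
  have inj: "inj_on f (carrier G)" and im: "f ` carrier G = carrier H" using bij unfolding bij_betw_def by auto
  have fx: "f x \<in> carrier H" using x im by blast
  show ?thesis
  proof
    show "f ` Nbh G x \<subseteq> Nbh H (f x)"
    proof
      fix v assume "v \<in> f ` Nbh G x"
      then obtain y where y: "y \<in> Nbh G x" "v = f y" by blast
      have yc: "y \<in> carrier G" "y = x \<or> epg_adj G x y" using y(1) Nbh_adj[OF gG x] by auto
      hence "f y \<in> carrier H" "f y = f x \<or> epg_adj H (f x) (f y)" using im adj x by auto
      thus "v \<in> Nbh H (f x)" using Nbh_adj[OF gH fx] y(2) by simp
    qed
    show "Nbh H (f x) \<subseteq> f ` Nbh G x"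
    proof
      fix v assume "v \<in> Nbh H (f x)"
      hence v: "v \<in> carrier H" "v = f x \<or> epg_adj H (f x) v" using Nbh_adj[OF gH fx] by auto
      then obtain y where y: "y \<in> carrier G" "v = f y" using im by blast
      have "y = x \<or> epg_adj G x y"
      proof (cases "f y = f x")
        case True thus ?thesis using inj y(1) x by (simp add: inj_on_eq_iff)
      next
        case False thus ?thesis using v y adj x by auto
      qed
      hence "y \<in> Nbh G x" using Nbh_adj[OF gG x] y(1) by simp
      thus "v \<in> f ` Nbh G x" using y(2) by blast
    qed
  qed
qed

lemma iso_gen_img:
  fixes G :: "('a, 'b) monoid_scheme" and H :: "('c, 'd) monoid_scheme"
  assumes gG: "group G" "finite (carrier G)" and gH: "group H" "finite (carrier H)"
    and h: "h \<in> hom G H" and w: "w \<in> carrier G"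
  shows "h ` generate G {w} = generate H {h w}"
proof -
  have hw: "h w \<in> carrier H" using h w unfolding hom_def by auto
  have hp: "h (w [^]\<^bsub>G\<^esub> (k::nat)) = h w [^]\<^bsub>H\<^esub> k" for k
    by (rule hom_nat_pow[OF h w gG(1) gH(1)])
  have "h ` {w [^]\<^bsub>G\<^esub> (k::nat) | k. True} = {h w [^]\<^bsub>H\<^esub> (k::nat) | k. True}"
  proof
    show "h ` {w [^]\<^bsub>G\<^esub> (k::nat) | k. True} \<subseteq> {h w [^]\<^bsub>H\<^esub> (k::nat) | k. True}"
      using hp by auto
    show "{h w [^]\<^bsub>H\<^esub> (k::nat) | k. True} \<subseteq> h ` {w [^]\<^bsub>G\<^esub> (k::nat) | k. True}"
    proof
      fix t assume "t \<in> {h w [^]\<^bsub>H\<^esub> (k::nat) | k. True}"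
      then obtain k :: nat where "t = h w [^]\<^bsub>H\<^esub> k" by blast
      hence "t = h (w [^]\<^bsub>G\<^esub> k)" using hp by simp
      thus "t \<in> h ` {w [^]\<^bsub>G\<^esub> (k::nat) | k. True}" by blast
    qed
  qed
  thus ?thesis using group.gen_nat[OF gG w] group.gen_nat[OF gH hw] by simp
qed

lemma iso_adj:
  fixes G :: "('a, 'b) monoid_scheme" and H :: "('c, 'd) monoid_scheme"
  assumes gG: "group G" "finite (carrier G)" and gH: "group H" "finite (carrier H)"
    and h: "h \<in> iso G H"
  shows "epg_iso G H"
proof -
  have hom: "h \<in> hom G H" and bij: "bij_betw h (carrier G) (carrier H)" using h unfolding iso_def by auto
  have inj: "inj_on h (carrier G)" and im: "h ` carrier G = carrier H" using bij unfolding bij_betw_def by auto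
  have "epg_adj G x y \<longleftrightarrow> epg_adj H (h x) (h y)" if x: "x \<in> carrier G" and y: "y \<in> carrier G" for x y
  proof -
    have hx: "h x \<in> carrier H" "h y \<in> carrier H" using x y im by auto
    have ne: "x \<noteq> y \<longleftrightarrow> h x \<noteq> h y" using inj x y by (auto simp: inj_on_eq_iff)
    have gsub: "generate G {w} \<subseteq> carrier G" if "w \<in> carrier G" for w
      using group.gen_carrier[OF gG(1) that] .
    have ex: "(\<exists>w\<in>carrier G. x \<in> generate G {w} \<and> y \<in> generate G {w}) \<longleftrightarrow>
              (\<exists>w\<in>carrier H. h x \<in> generate H {w} \<and> h y \<in> generate H {w})"
    proof
      assume "\<exists>w\<in>carrier G. x \<in> generate G {w} \<and> y \<in> generate G {w}"
      then obtain w where w: "w \<in> carrier G" "x \<in> generate G {w}" "y \<in> generate G {w}" by blast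
      have "h x \<in> generate H {h w}" "h y \<in> generate H {h w}"
        using iso_gen_img[OF gG gH hom w(1)] w(2,3) by blast+
      moreover have "h w \<in> carrier H" using w(1) im by blast
      ultimately show "\<exists>w\<in>carrier H. h x \<in> generate H {w} \<and> h y \<in> generate H {w}" by blast
    next
      assume "\<exists>w\<in>carrier H. h x \<in> generate H {w} \<and> h y \<in> generate H {w}"
      then obtain w' where w': "w' \<in> carrier H" "h x \<in> generate H {w'}" "h y \<in> generate H {w'}" by blast
      obtain w where w: "w \<in> carrier G" "w' = h w" using w'(1) im by blast
      have img: "h ` generate G {w} = generate H {w'}" using iso_gen_img[OF gG gH hom w(1)] w(2) by simp
      have "x \<in> generate G {w}"
      proof -
        obtain x' where x': "x' \<in> generate G {w}" "h x = h x'" using w'(2) img by blast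
        have "x' \<in> carrier G" using x'(1) gsub[OF w(1)] by blast
        hence "x = x'" using inj x x'(2) by (simp add: inj_on_eq_iff)
        thus ?thesis using x'(1) by simp
      qed
      moreover have "y \<in> generate G {w}"
      proof -
        obtain y' where y': "y' \<in> generate G {w}" "h y = h y'" using w'(3) img by blast
        have "y' \<in> carrier G" using y'(1) gsub[OF w(1)] by blast
        hence "y = y'" using inj y y'(2) by (simp add: inj_on_eq_iff)
        thus ?thesis using y'(1) by simp
      qed
      ultimately show "\<exists>w\<in>carrier G. x \<in> generate G {w} \<and> y \<in> generate G {w}" using w(1) by blast
    qed
    show ?thesis unfolding adj_char[OF gG] adj_char[OF gH] using x y hx ne ex by blast
  qed
  thus ?thesis unfolding epg_iso_def using bij by blast
qed

theorem theorem7: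
  fixes G :: "('a, 'b) monoid_scheme" and p n :: nat
  assumes "group G" and "finite (carrier G)"
    and "Factorial_Ring.prime p" and "n > 0" and "coprime n p"
  shows "epg_iso G (Zppn p n) \<longleftrightarrow> G \<cong> Zppn p n"
proof -
  interpret Kc: Kctx p n using assms(3-5) by unfold_locales
  have gK: "group (Zppn p n)" by (rule Kc.gK)
  have fK: "finite (carrier (Zppn p n))" by (rule Kc.finK)
  show ?thesis
  proof
    assume "G \<cong> Zppn p n"
    then obtain h where "h \<in> iso G (Zppn p n)" unfolding is_iso_def by blast
    thus "epg_iso G (Zppn p n)" using iso_adj[OF assms(1,2) gK fK] by blast
  next
    assume "epg_iso G (Zppn p n)"
    then obtain f where bij: "bij_betw f (carrier G) (carrier (Zppn p n))"
      and adj: "\<forall>x\<in>carrier G. \<forall>y\<in>carrier G. epg_adj G x y \<longleftrightarrow> epg_adj (Zppn p n) (f x) (f y)"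
      unfolding epg_iso_def by blast
    have inj: "inj_on f (carrier G)" and im: "f ` carrier G = carrier (Zppn p n)"
      using bij unfolding bij_betw_def by auto
    have fmem: "f x \<in> carrier (Zppn p n)" if "x \<in> carrier G" for x by (rule bij_betw_apply[OF bij that])
    have fsurj: "\<exists>x. x \<in> carrier G \<and> u = f x" if "u \<in> carrier (Zppn p n)" for u
    proof -
      have "u \<in> f ` carrier G" using that im by simp
      thus ?thesis by blast
    qed
    have tr: "f ` Nbh G x = Nbh (Zppn p n) (f x)" if "x \<in> carrier G" for x
      by (rule Nbh_transfer[OF assms(1,2) gK fK bij adj that])
    have NsubG: "Nbh G x \<subseteq> carrier G" for x unfolding Nbh_def by auto
    have cardG: "card (carrier G) = p * p * n"
      using bij_betw_same_card[OF bij] Kc.cardK by simp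
    have eqv: "Nbh G x = carrier G \<longleftrightarrow> Nbh (Zppn p n) (f x) = carrier (Zppn p n)" if x: "x \<in> carrier G" for x
    proof
      assume "Nbh G x = carrier G" thus "Nbh (Zppn p n) (f x) = carrier (Zppn p n)" using tr[OF x] im by simp
    next
      assume "Nbh (Zppn p n) (f x) = carrier (Zppn p n)"
      hence "f ` Nbh G x = f ` carrier G" using tr[OF x] im by simp
      thus "Nbh G x = carrier G" using inj_on_image_eq_iff[OF inj NsubG subset_refl] by blast
    qed
    have cardN: "card (Nbh G x) = p * n" if x: "x \<in> carrier G" and ne: "Nbh G x \<noteq> carrier G" for x
    proof -
      have "card (Nbh G x) = card (f ` Nbh G x)"
        using card_image[OF inj_on_subset[OF inj NsubG]] by simp
      also have "\<dots> = card (Nbh (Zppn p n) (f x))" using tr[OF x] by simp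
      also have "\<dots> = p * n"
      proof -
        have a1: "Nbh (Zppn p n) (f x) \<noteq> carrier (Zppn p n)" using eqv[OF x] ne by simp
        have a2: "f x \<in> carrier (Zppn p n)" by (rule fmem[OF x])
        show ?thesis by (rule Kc.KN[OF a2 a1])
      qed
      finally show ?thesis .
    qed
    have DG: "f ` {x \<in> carrier G. Nbh G x = carrier G} = {u \<in> carrier (Zppn p n). Nbh (Zppn p n) u = carrier (Zppn p n)}"
    proof
      show "f ` {x \<in> carrier G. Nbh G x = carrier G} \<subseteq> {u \<in> carrier (Zppn p n). Nbh (Zppn p n) u = carrier (Zppn p n)}"
      proof
        fix v assume "v \<in> f ` {x \<in> carrier G. Nbh G x = carrier G}"
        then obtain x where x: "x \<in> carrier G" "Nbh G x = carrier G" "v = f x" by blast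
        have "f x \<in> carrier (Zppn p n)" by (rule fmem[OF x(1)])
        moreover have "Nbh (Zppn p n) (f x) = carrier (Zppn p n)" using eqv[OF x(1)] x(2) by simp
        ultimately show "v \<in> {u \<in> carrier (Zppn p n). Nbh (Zppn p n) u = carrier (Zppn p n)}" using x(3) by simp
      qed
      show "{u \<in> carrier (Zppn p n). Nbh (Zppn p n) u = carrier (Zppn p n)} \<subseteq> f ` {x \<in> carrier G. Nbh G x = carrier G}"
      proof
        fix u assume u: "u \<in> {u \<in> carrier (Zppn p n). Nbh (Zppn p n) u = carrier (Zppn p n)}"
        hence "u \<in> carrier (Zppn p n)" by simp
        then obtain x where x: "x \<in> carrier G" "u = f x" using fsurj by blast
        hence "Nbh G x = carrier G" using eqv[OF x(1)] u by simp
        thus "u \<in> f ` {x \<in> carrier G. Nbh G x = carrier G}" using x by blast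
      qed
    qed
    have cardD: "card {x \<in> carrier G. Nbh G x = carrier G} = n"
    proof -
      have "{x \<in> carrier G. Nbh G x = carrier G} \<subseteq> carrier G" by blast
      hence "inj_on f {x \<in> carrier G. Nbh G x = carrier G}" by (rule inj_on_subset[OF inj])
      hence "card {x \<in> carrier G. Nbh G x = carrier G} = card (f ` {x \<in> carrier G. Nbh G x = carrier G})"
        by (simp add: card_image)
      thus ?thesis using DG Kc.card_KD by simp
    qed
    have eabs: "epg_abs G p n"
      apply (rule epg_abs.intro[OF assms(1)])
      apply (rule epg_abs_axioms.intro)
      using assms cardG cardD cardN by auto
    interpret E: epg_abs G p n by (rule eabs)
    obtain x0 x1 where x0: "x0 \<in> carrier G" "x0 \<notin> E.D" and x1: "x1 \<in> carrier G" "x1 \<notin> E.D"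
      and ne01: "Nbh G x0 \<noteq> Nbh G x1" by (rule E.Om_two)
    obtain g0 where g0: "g0 \<in> carrier G" "g0 \<notin> E.D" "Nbh G x0 = generate G {g0}" "group.ord G g0 = p * n"
      using E.cyc[OF x0] by blast
    obtain g1 where g1: "g1 \<in> carrier G" "g1 \<notin> E.D" "Nbh G x1 = generate G {g1}" "group.ord G g1 = p * n"
      using E.cyc[OF x1] by blast
    have N0: "Nbh G g0 = generate G {g0}"
      using E.key[OF x0 _ g0(2)] g0(3) E.gen_self[OF g0(1)] by simp
    have N1: "Nbh G g1 = generate G {g1}"
      using E.key[OF x1 _ g1(2)] g1(3) E.gen_self[OF g1(1)] by simp
    have eabs2: "epg_abs2 G p n g0 g1"
      apply (rule epg_abs2.intro[OF eabs])
      apply (rule epg_abs2_axioms.intro)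
      using g0 g1 N0 N1 ne01 by auto
    interpret E2: epg_abs2 G p n g0 g1 by (rule eabs2)
    show "G \<cong> Zppn p n"
      by (rule E.iso_from_gens[OF assms(2) assms(3) assms(4) E.p_not_dvd_n cardG
            E2.ac E2.bc E2.cc E2.oa E2.ob E2.oc E2.ab_comm
            E2.D_central[OF E2.cD E2.ac] E2.D_central[OF E2.cD E2.bc] E2.b_notin_a])
  qed
qed

end
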